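(* Let $G$ be a strongly connected digraph with $N>2$ nodes in which all nodes run the Privacy-Preserving Push-Sum Algorithm described in the context. Let $\mathcal A\subset\mathcal V$ be a set of honest-but-curious nodes and $i\notin\mathcal A$. If $N_i^{out}\cup N_i^{in}\subseteq\mathcal A$, then the initial value $x_i(0)$ can be uniquely inferred by $\mathcal A$ in an asymptotic sense: there exist quantities $\hat x_i(k)$, each computable from the information sequence $\mathcal I_{\mathcal A}(0:k)$, such that $\hat x_i(k)\to x_i(0)$ as $k\to\infty$ with probability one.
   Context: Digraph conventions: $\mathcal V=\{1,\dots,N\}$, no self-loops; $(j,i)\in\mathcal E$ means node $i$ can send messages to node $j$. $N_i^{in}=\{j:(i,j)\in\mathcal E\}$, $N_i^{out}=\{j:(j,i)\in\mathcal E\}$. Strongly connected: a directed path exists from any node to any other node. Privacy-Preserving Push-Sum Algorithm (each node $i$ has a private real initial state $x_i(0)$; $M>0$ is a fixed constant). Initialization: node $i$ draws $x^\alpha_{i,1}(0)\sim U(-M,M)$ and sets $x^\beta_{i,1}(0)=2x_i(0)-x^\alpha_{i,1}(0)$, $x^\alpha_{i,2}(0)=0$, $x^\beta_{i,2}(0)=2$. Weights: at $k=0$, node $i$ draws the numbers $\{p_{ji}(0):j\in N_i^{out}\cup\{i\}\}$ and $\alpha_i(0)$ independently from $\mathcal N(0,M)$ and normalizes them so that $\sum_{j=1}^N p_{ji}(0)+\alpha_i(0)=1$; at each $k\ge1$, node $i$ draws $\{p_{ji}(k):j\in N_i^{out}\cup\{i\}\}$ and $\alpha_i(k)$ independently from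 $U(0,1)$ and normalizes them so that $\sum_{j=1}^N p_{ji}(k)+\alpha_i(k)=1$; in all cases $p_{ji}(k)=0$ if $j\notin N_i^{out}\cup\{i\}$. State update, for $k\ge0$, $l=1,2$: node $i$ sends $p_{ji}(k)x^\alpha_{i,l}(k)$ to each $j\in N_i^{out}$ and updates $$x^\alpha_{i,l}(k+1)=\sum_{j\in N_i^{in}\cup\{i\}}p_{ij}(k)x^\alpha_{j,l}(k)+x^\beta_{i,l}(k),\qquad x^\beta_{i,l}(k+1)=\alpha_i(k)x^\alpha_{i,l}(k).$$ Node $i$'s estimated average is $\hat x^{ave}_i(k+1)=x^\alpha_{i,1}(k+1)/x^\alpha_{i,2}(k+1)$. The substate $x^\beta_{i,l}$ is never transmitted. Honest-but-curious nodes: nodes that follow the protocol (and know it), try to infer other nodes' private initial values from the data they receive, and may pool their data. For a set $\mathcal A$ of such nodes, the information available at time $k$ is $\mathcal I_{\mathcal A}(k)=\{\mathcal I_a(k):a\in\mathcal A\}$ with $$\mathcal I_a(k)=\{x^\alpha_{a,l}(k),x^\beta_{a,l}(k),p_{ja}(k),p_{ap}(k)x^\alpha_{p,l}(k): p\in N_a^{in},\ j\in\mathcal V,\ l=1,2\},$$ and $\mathcal I_{\mathcal A}(0:\kappa)=\bigcup_{0\le k\le\kappa}\mathcal I_{\mathcal A}(k)$. *)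

theory Defs
  imports "HOL-Probability.Probability"
begin

text \<open>Nodes are the naturals 1..N.  An edge (j,i) in E means node i can send to node j.\<close>

definition nodes :: "nat \<Rightarrow> nat set" where
  "nodes N = {1..N}"

definition Nin :: "(nat \<times> nat) set \<Rightarrow> nat \<Rightarrow> nat set" where
  "Nin E i = {j. (i, j) \<in> E}"

definition Nout :: "(nat \<times> nat) set \<Rightarrow> nat \<Rightarrow> nat set" where
  "Nout E i = {j. (j, i) \<in> E}"

definition digraph_on :: "nat \<Rightarrow> (nat \<times> nat) set \<Rightarrow> bool" where
  "digraph_on N E \<longleftrightarrow> E \<subseteq> nodes N \<times> nodes N \<and> (\<forall>v. (v, v) \<notin> E)"

definition strongly_connected :: "nat \<Rightarrow> (nat \<times> nat) set \<Rightarrow> bool" where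
  "strongly_connected N E \<longleftrightarrow> (\<forall>u\<in>nodes N. \<forall>v\<in>nodes N. (u, v) \<in> E\<^sup>*)"

text \<open>Elementary random draws of the protocol:
  XInit i        : the draw x^alpha_{i,1}(0) ~ U(-M,M);
  W k i (Some j) : raw (unnormalized) weight for p_{ji}(k);
  W k i None     : raw (unnormalized) weight for alpha_i(k).
  Raw weights are N(0,M) at k = 0 and U(0,1) at k >= 1.  All draws are independent.
  (Raw weights W k i (Some j) with j not an out-neighbour of i or i itself are drawn
  but never used.)\<close>

datatype draw = XInit nat | W nat nat "nat option"

definition draw_distr :: "real \<Rightarrow> draw \<Rightarrow> real measure" where
  "draw_distr M d = (case d of
      XInit _ \<Rightarrow> uniform_measure lborel {-M<..<M}
    | W k _ _ \<Rightarrow> (if k = 0 then density lborel (normal_density 0 (sqrt M))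
                 else uniform_measure lborel {0<..<1}))"

definition pp_space :: "real \<Rightarrow> (draw \<Rightarrow> real) measure" where
  "pp_space M = (\<Pi>\<^sub>M d\<in>UNIV. draw_distr M d)"

definition wnorm :: "(nat \<times> nat) set \<Rightarrow> (draw \<Rightarrow> real) \<Rightarrow> nat \<Rightarrow> nat \<Rightarrow> real" where
  "wnorm E \<omega> k i = (\<Sum>j\<in>Nout E i \<union> {i}. \<omega> (W k i (Some j))) + \<omega> (W k i None)"

definition pw :: "(nat \<times> nat) set \<Rightarrow> (draw \<Rightarrow> real) \<Rightarrow> nat \<Rightarrow> nat \<Rightarrow> nat \<Rightarrow> real" where
  "pw E \<omega> k j i = (if j \<in> Nout E i \<union> {i} then \<omega> (W k i (Some j)) / wnorm E \<omega> k i else 0)"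

definition alw :: "(nat \<times> nat) set \<Rightarrow> (draw \<Rightarrow> real) \<Rightarrow> nat \<Rightarrow> nat \<Rightarrow> real" where
  "alw E \<omega> k i = \<omega> (W k i None) / wnorm E \<omega> k i"

primrec st :: "(nat \<times> nat) set \<Rightarrow> (draw \<Rightarrow> real) \<Rightarrow> (nat \<Rightarrow> real) \<Rightarrow> (nat \<Rightarrow> real)
               \<Rightarrow> nat \<Rightarrow> (nat \<Rightarrow> real) \<times> (nat \<Rightarrow> real)" where
  "st E \<omega> a0 b0 0 = (a0, b0)"
| "st E \<omega> a0 b0 (Suc k) =
     (let a = fst (st E \<omega> a0 b0 k); b = snd (st E \<omega> a0 b0 k) in
       (\<lambda>i. (\<Sum>j\<in>Nin E i \<union> {i}. pw E \<omega> k i j * a j) + b i,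
        \<lambda>i. alw E \<omega> k i * a i))"

definition init_a :: "(nat \<Rightarrow> real) \<Rightarrow> (draw \<Rightarrow> real) \<Rightarrow> nat \<Rightarrow> nat \<Rightarrow> real" where
  "init_a x0 \<omega> l i = (if l = 1 then \<omega> (XInit i) else 0)"

definition init_b :: "(nat \<Rightarrow> real) \<Rightarrow> (draw \<Rightarrow> real) \<Rightarrow> nat \<Rightarrow> nat \<Rightarrow> real" where
  "init_b x0 \<omega> l i = (if l = 1 then 2 * x0 i - \<omega> (XInit i) else 2)"

definition xa :: "(nat \<times> nat) set \<Rightarrow> (nat \<Rightarrow> real) \<Rightarrow> (draw \<Rightarrow> real) \<Rightarrow> nat \<Rightarrow> nat \<Rightarrow> nat \<Rightarrow> real" where
  "xa E x0 \<omega> l k i = fst (st E \<omega> (init_a x0 \<omega> l) (init_b x0 \<omega> l) k) i"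

definition xb :: "(nat \<times> nat) set \<Rightarrow> (nat \<Rightarrow> real) \<Rightarrow> (draw \<Rightarrow> real) \<Rightarrow> nat \<Rightarrow> nat \<Rightarrow> nat \<Rightarrow> real" where
  "xb E x0 \<omega> l k i = snd (st E \<omega> (init_a x0 \<omega> l) (init_b x0 \<omega> l) k) i"

text \<open>Labels of the observable quantities:
  OXa k a l   : x^alpha_{a,l}(k);   OXb k a l : x^beta_{a,l}(k);
  OP k j a    : p_{ja}(k);          OM k a p l : p_{ap}(k) x^alpha_{p,l}(k).\<close>
datatype obs = OXa nat nat nat | OXb nat nat nat | OP nat nat nat | OM nat nat nat nat

text \<open>The information I_A(0:kappa), as a partial map from labels to values: a label is
  defined exactly when the corresponding quantity belongs to I_A(0:kappa).\<close>
definition info :: "nat \<Rightarrow> (nat \<times> nat) set \<Rightarrow> nat set \<Rightarrow> (nat \<Rightarrow> real) \<Rightarrow> (draw \<Rightarrow> real)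
                    \<Rightarrow> nat \<Rightarrow> obs \<Rightarrow> real option" where
  "info N E A x0 \<omega> \<kappa> ob = (case ob of
      OXa k a l \<Rightarrow> (if k \<le> \<kappa> \<and> a \<in> A \<and> l \<in> {1,2} then Some (xa E x0 \<omega> l k a) else None)
    | OXb k a l \<Rightarrow> (if k \<le> \<kappa> \<and> a \<in> A \<and> l \<in> {1,2} then Some (xb E x0 \<omega> l k a) else None)
    | OP k j a \<Rightarrow> (if k \<le> \<kappa> \<and> a \<in> A \<and> j \<in> nodes N then Some (pw E \<omega> k j a) else None)
    | OM k a p l \<Rightarrow> (if k \<le> \<kappa> \<and> a \<in> A \<and> p \<in> Nin E a \<and> l \<in> {1,2}
                     then Some (pw E \<omega> k a p * xa E x0 \<omega> l k p) else None))"

end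

theory Submission
  imports Defs
begin

primrec Phi :: "(nat \<Rightarrow> 'v \<Rightarrow> 'v \<Rightarrow> real) \<Rightarrow> 'v set \<Rightarrow> nat \<Rightarrow> nat \<Rightarrow> 'v \<Rightarrow> 'v \<Rightarrow> real" where
  "Phi C V k 0 v u = (if v = u then 1 else 0)"
| "Phi C V k (Suc n) v u = (\<Sum>w\<in>V. C (k+n) v w * Phi C V k n w u)"

lemma phi_apply:
  assumes fin: "finite V"
    and rec: "\<And>t v. v \<in> V \<Longrightarrow> Y (Suc t) v = (\<Sum>u\<in>V. C t v u * Y t u)"
    and v: "v \<in> V"
  shows "Y (k+n) v = (\<Sum>u\<in>V. Phi C V k n v u * Y k u)"
  using v
proof (induction n arbitrary: v)
  case 0
  have "(\<Sum>u\<in>V. Phi C V k 0 v u * Y k u) = (\<Sum>u\<in>V. if v = u then Y k u else 0)"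
    by (rule sum.cong) auto
  then show ?case using fin 0 by simp
next
  case (Suc n)
  have "Y (k + Suc n) v = (\<Sum>w\<in>V. C (k+n) v w * Y (k+n) w)"
    using rec[OF Suc.prems, of "k+n"] by simp
  also have "\<dots> = (\<Sum>w\<in>V. C (k+n) v w * (\<Sum>u\<in>V. Phi C V k n w u * Y k u))"
    using Suc.IH by (intro sum.cong) auto
  also have "\<dots> = (\<Sum>w\<in>V. \<Sum>u\<in>V. C (k+n) v w * (Phi C V k n w u * Y k u))"
    by (simp add: sum_distrib_left)
  also have "\<dots> = (\<Sum>u\<in>V. \<Sum>w\<in>V. C (k+n) v w * (Phi C V k n w u * Y k u))"
    by (rule sum.swap)
  also have "\<dots> = (\<Sum>u\<in>V. Phi C V k (Suc n) v u * Y k u)"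
    by (simp add: sum_distrib_right mult.assoc)
  finally show ?case .
qed

lemma phi_nonneg:
  assumes "\<And>t v u. t \<ge> k \<Longrightarrow> C t v u \<ge> 0"
  shows "Phi C V k n v u \<ge> 0"
  by (induction n arbitrary: v) (auto intro!: sum_nonneg mult_nonneg_nonneg assms)

lemma phi_colsum:
  assumes fin: "finite V"
    and cs: "\<And>t u. t \<ge> k \<Longrightarrow> u \<in> V \<Longrightarrow> (\<Sum>v\<in>V. C t v u) = 1"
    and u: "u \<in> V"
  shows "(\<Sum>v\<in>V. Phi C V k n v u) = 1"
proof (induction n)
  case 0
  then show ?case using fin u by (simp add: sum.delta')
next
  case (Suc n)
  have "(\<Sum>v\<in>V. Phi C V k (Suc n) v u) = (\<Sum>v\<in>V. \<Sum>w\<in>V. C (k+n) v w * Phi C V k n w u)"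
    by simp
  also have "\<dots> = (\<Sum>w\<in>V. \<Sum>v\<in>V. C (k+n) v w * Phi C V k n w u)"
    by (rule sum.swap)
  also have "\<dots> = (\<Sum>w\<in>V. Phi C V k n w u * (\<Sum>v\<in>V. C (k+n) v w))"
    by (simp add: sum_distrib_left mult.commute)
  finally have "(\<Sum>v\<in>V. Phi C V k (Suc n) v u) = (\<Sum>w\<in>V. Phi C V k n w u * (\<Sum>v\<in>V. C (k+n) v w))" .
  also have "\<dots> = (\<Sum>w\<in>V. Phi C V k n w u)"
    using cs by (intro sum.cong) auto
  finally show ?case using Suc by simp
qed

lemma phi_le1:
  assumes fin: "finite V"
    and nn: "\<And>t v u. t \<ge> k \<Longrightarrow> C t v u \<ge> 0"
    and cs: "\<And>t u. t \<ge> k \<Longrightarrow> u \<in> V \<Longrightarrow> (\<Sum>v\<in>V. C t v u) = 1"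
    and u: "u \<in> V" and v: "v \<in> V"
  shows "Phi C V k n v u \<le> 1"
proof -
  have "Phi C V k n v u \<le> (\<Sum>v\<in>V. Phi C V k n v u)"
    using fin v by (intro member_le_sum phi_nonneg nn) auto
  then show ?thesis using phi_colsum[OF fin cs u] by simp
qed

lemma phi_path:
  assumes nn: "\<And>t v u. t \<ge> k \<Longrightarrow> C t v u \<ge> 0"
    and fin: "finite V"
    and RV: "R \<subseteq> V \<times> V"
    and big: "\<And>t u v. t \<ge> k \<Longrightarrow> t < k + n \<Longrightarrow> (u,v) \<in> R \<Longrightarrow> C t v u \<ge> \<delta>"
    and d: "\<delta> \<ge> 0"
    and p: "(u,v) \<in> R ^^ n" and u: "u \<in> V"
  shows "Phi C V k n v u \<ge> \<delta> ^ n"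
  using p big
proof (induction n arbitrary: v)
  case 0
  then show ?case by simp
next
  case (Suc n)
  from Suc.prems(1) obtain w where uw: "(u,w) \<in> R ^^ n" and wv: "(w,v) \<in> R"
    by (auto simp: relpow.simps)
  have wV: "w \<in> V" using wv RV by auto
  have IH: "Phi C V k n w u \<ge> \<delta> ^ n"
    using Suc.IH[OF uw] Suc.prems(2) by auto
  have c: "C (k+n) v w \<ge> \<delta>" using Suc.prems(2)[of "k+n" w v] wv by auto
  have "\<delta> ^ Suc n = \<delta> * \<delta> ^ n" by simp
  also have "\<dots> \<le> C (k+n) v w * Phi C V k n w u"
    using IH c d by (intro mult_mono) auto
  also have "\<dots> \<le> (\<Sum>x\<in>V. C (k+n) v x * Phi C V k n x u)"
    using fin wV by (intro member_le_sum[where f="\<lambda>x. C (k+n) v x * Phi C V k n x u"] 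
         mult_nonneg_nonneg nn phi_nonneg) auto
  finally show ?case by simp
qed

lemma ratio_upper:
  fixes p :: "'v \<Rightarrow> real"
  assumes fin: "finite V" and us: "us \<in> V"
    and Pnn: "\<And>u. u \<in> V \<Longrightarrow> p u \<ge> 0"
    and zpos: "\<And>u. u \<in> V \<Longrightarrow> z u > 0"
    and y': "y' = (\<Sum>u\<in>V. p u * y u)" and z': "z' = (\<Sum>u\<in>V. p u * z u)"
    and z'pos: "z' > 0"
    and hi: "\<And>u. u \<in> V \<Longrightarrow> y u / z u \<le> hi"
    and w: "p us * z us \<ge> c * z'"
    and c: "c \<ge> 0"
  shows "y' / z' \<le> hi - c * (hi - y us / z us)"
proof -
  have "y' = p us * y us + (\<Sum>u\<in>V-{us}. p u * y u)"
    unfolding y' using fin us by (simp add: sum.remove)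
  also have "(\<Sum>u\<in>V-{us}. p u * y u) \<le> (\<Sum>u\<in>V-{us}. hi * (p u * z u))"
  proof (rule sum_mono)
    fix u assume u: "u \<in> V - {us}"
    have "p u * y u = p u * z u * (y u / z u)" using zpos[of u] u by simp
    also have "\<dots> \<le> p u * z u * hi"
      using u hi[of u] Pnn[of u] zpos[of u] by (intro mult_left_mono) auto
    finally show "p u * y u \<le> hi * (p u * z u)" by (simp add: ac_simps)
  qed
  also have "(\<Sum>u\<in>V-{us}. hi * (p u * z u)) = hi * (z' - p us * z us)"
    unfolding z' using fin us by (simp add: sum.remove sum_distrib_left)
  finally have A: "y' \<le> p us * y us + hi * (z' - p us * z us)" by simp
  have B: "p us * y us = (p us * z us) * (y us / z us)" using zpos[OF us] by simp
  have hr: "hi - y us / z us \<ge> 0" using hi[OF us] by simp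
  have "y' \<le> hi * z' - (p us * z us) * (hi - y us / z us)"
    using A B by (simp add: algebra_simps)
  also have "\<dots> \<le> hi * z' - c * z' * (hi - y us / z us)"
    using w hr by (intro diff_left_mono mult_right_mono) auto
  finally have "y' \<le> z' * (hi - c * (hi - y us / z us))" by (simp add: algebra_simps)
  then show ?thesis using z'pos by (simp add: pos_divide_le_eq mult.commute)
qed

lemma ratio_lower:
  fixes p :: "'v \<Rightarrow> real"
  assumes fin: "finite V" and us: "us \<in> V"
    and Pnn: "\<And>u. u \<in> V \<Longrightarrow> p u \<ge> 0"
    and zpos: "\<And>u. u \<in> V \<Longrightarrow> z u > 0"
    and y': "y' = (\<Sum>u\<in>V. p u * y u)" and z': "z' = (\<Sum>u\<in>V. p u * z u)"
    and z'pos: "z' > 0"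
    and lo: "\<And>u. u \<in> V \<Longrightarrow> lo \<le> y u / z u"
    and w: "p us * z us \<ge> c * z'"
    and c: "c \<ge> 0"
  shows "lo + c * (y us / z us - lo) \<le> y' / z'"
proof -
  have "(- y') / z' \<le> (- lo) - c * ((- lo) - (- y us) / z us)"
  proof (rule ratio_upper[where y="\<lambda>u. - y u" and y'="- y'" and p=p and z=z and z'=z' and V=V and us=us])
    show "- y' = (\<Sum>u\<in>V. p u * - y u)" unfolding y' by (simp add: sum_negf)
    fix u assume "u \<in> V" then show "- y u / z u \<le> - lo" using lo[of u] by simp
  qed (use assms in auto)
  then show ?thesis by (simp add: algebra_simps)
qed

lemma weight_bound:
  fixes p :: "'v \<Rightarrow> real"
  assumes fin: "finite V" and us: "us \<in> V"
    and Pnn: "\<And>u. u \<in> V \<Longrightarrow> p u \<ge> 0"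
    and Ple: "\<And>u. u \<in> V \<Longrightarrow> p u \<le> 1"
    and zpos: "\<And>u. u \<in> V \<Longrightarrow> z u > 0"
    and zmax: "\<And>u. u \<in> V \<Longrightarrow> z u \<le> z us"
    and d: "p us \<ge> \<delta>" "\<delta> \<ge> 0"
  shows "p us * z us \<ge> (\<delta> / card V) * (\<Sum>u\<in>V. p u * z u)"
proof -
  have cV: "card V > 0" using fin us card_gt_0_iff by blast
  have "(\<Sum>u\<in>V. p u * z u) \<le> (\<Sum>u\<in>V. z us)"
  proof (rule sum_mono)
    fix u assume u: "u \<in> V"
    have "p u * z u \<le> 1 * z u" using Ple[OF u] zpos[OF u] by (intro mult_right_mono) auto
    also have "\<dots> \<le> z us" using zmax[OF u] by simp
    finally show "p u * z u \<le> z us" .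
  qed
  also have "\<dots> = card V * z us" by simp
  finally have s: "(\<Sum>u\<in>V. p u * z u) \<le> card V * z us" .
  have "(\<delta> / card V) * (\<Sum>u\<in>V. p u * z u) \<le> (\<delta> / card V) * (card V * z us)"
    using s d cV by (intro mult_left_mono) auto
  also have "\<dots> = \<delta> * z us" using cV by simp
  also have "\<dots> \<le> p us * z us" using d zpos[OF us] by (intro mult_right_mono) auto
  finally show ?thesis .
qed

lemma contraction_conv:
  fixes y z :: "nat \<Rightarrow> 'v \<Rightarrow> real" and C :: "nat \<Rightarrow> 'v \<Rightarrow> 'v \<Rightarrow> real"
  assumes fin: "finite V" and ne: "V \<noteq> {}"
    and recy: "\<And>t v. v \<in> V \<Longrightarrow> y (Suc t) v = (\<Sum>u\<in>V. C t v u * y t u)"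
    and recz: "\<And>t v. v \<in> V \<Longrightarrow> z (Suc t) v = (\<Sum>u\<in>V. C t v u * z t u)"
    and nn: "\<And>t v u. t \<ge> kz \<Longrightarrow> C t v u \<ge> 0"
    and cs: "\<And>t u. t \<ge> kz \<Longrightarrow> u \<in> V \<Longrightarrow> (\<Sum>v\<in>V. C t v u) = 1"
    and zpos: "\<And>t v. t \<ge> kz \<Longrightarrow> v \<in> V \<Longrightarrow> z t v > 0"
    and good: "infinite {t. t \<ge> kz \<and> (\<forall>v\<in>V. \<forall>u\<in>V. Phi C V t Lb v u \<ge> \<gamma>)}"
    and gam: "\<gamma> > 0"
    and w: "w \<in> V"
  shows "(\<lambda>t. y (Suc t) w / z (Suc t) w - y t w / z t w) \<longlonglongrightarrow> 0"
proof -
  define \<rho> where "\<rho> t v = y t v / z t v" for t v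
  define hi where "hi t = Max (\<rho> t ` V)" for t
  define lo where "lo t = Min (\<rho> t ` V)" for t
  define S where "S t = hi t - lo t" for t
  have hiI: "\<rho> t v \<le> hi t" if "v \<in> V" for t v
    unfolding hi_def using fin that by auto
  have loI: "lo t \<le> \<rho> t v" if "v \<in> V" for t v
    unfolding lo_def using fin that by auto
  have Pnn: "\<And>t n v u. t \<ge> kz \<Longrightarrow> Phi C V t n v u \<ge> 0"
    by (rule phi_nonneg) (auto intro: nn)
  have range: "lo t \<le> \<rho> (t+n) v \<and> \<rho> (t+n) v \<le> hi t" if t: "t \<ge> kz" and v: "v \<in> V" for t n v
  proof -
    obtain us where us: "us \<in> V" using ne by auto
    have ya: "y (t+n) v = (\<Sum>u\<in>V. Phi C V t n v u * y t u)"
      by (rule phi_apply[where Y=y, OF fin recy v])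
    have za: "z (t+n) v = (\<Sum>u\<in>V. Phi C V t n v u * z t u)"
      by (rule phi_apply[where Y=z, OF fin recz v])
    have "y (t+n) v / z (t+n) v \<le> hi t - 0 * (hi t - y t us / z t us)"
      by (rule ratio_upper[where p="Phi C V t n v" and V=V and us=us and z="z t" and y="y t", OF fin us _ _ ya za])
         (use mult_nonneg_nonneg[OF Pnn[OF t] less_imp_le[OF zpos[OF t us]]] t v us zpos Pnn hiI in \<open>auto simp: \<rho>_def intro: mult_nonneg_nonneg less_imp_le\<close>)
    moreover have "lo t + 0 * (y t us / z t us - lo t) \<le> y (t+n) v / z (t+n) v"
      by (rule ratio_lower[where p="Phi C V t n v" and V=V and us=us and z="z t" and y="y t", OF fin us _ _ ya za])
         (use mult_nonneg_nonneg[OF Pnn[OF t] less_imp_le[OF zpos[OF t us]]] t v us zpos Pnn loI in \<open>auto simp: \<rho>_def intro: mult_nonneg_nonneg less_imp_le\<close>)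
    ultimately show ?thesis by (simp add: \<rho>_def)
  qed
  have mono: "S (t+n) \<le> S t" if t: "t \<ge> kz" for t n
  proof -
    have "hi (t+n) \<le> hi t" unfolding hi_def[of "t+n"] using fin ne range[OF t] by auto
    moreover have "lo t \<le> lo (t+n)" unfolding lo_def[of "t+n"] using fin ne range[OF t] by auto
    ultimately show ?thesis by (simp add: S_def)
  qed
  have Snn: "S t \<ge> 0" for t
  proof -
    obtain v where "v \<in> V" using ne by auto
    then show ?thesis using hiI[of v t] loI[of v t] by (simp add: S_def)
  qed
  define c where "c = \<gamma> / card V"
  have cV: "card V > 0" using fin ne card_gt_0_iff by blast
  have c0: "c > 0" unfolding c_def using gam cV by simp
  have contr: "S (t+Lb) \<le> (1 - c) * S t"
    if t: "t \<ge> kz" and g: "\<forall>v\<in>V. \<forall>u\<in>V. Phi C V t Lb v u \<ge> \<gamma>" for t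
  proof -
    obtain us where us: "us \<in> V" and usmax: "z t us = Max (z t ` V)"
      using fin ne by (metis (mono_tags, lifting) Max_in finite_imageI image_iff image_is_empty)
    have zmax: "z t u \<le> z t us" if "u \<in> V" for u using usmax fin that by auto
    have bounds: "lo t + c * (\<rho> t us - lo t) \<le> \<rho> (t+Lb) v \<and> \<rho> (t+Lb) v \<le> hi t - c * (hi t - \<rho> t us)"
      if v: "v \<in> V" for v
    proof -
      have ya: "y (t+Lb) v = (\<Sum>u\<in>V. Phi C V t Lb v u * y t u)"
        by (rule phi_apply[where Y=y, OF fin recy v])
      have za: "z (t+Lb) v = (\<Sum>u\<in>V. Phi C V t Lb v u * z t u)"
        by (rule phi_apply[where Y=z, OF fin recz v])
      have Ple: "Phi C V t Lb v u \<le> 1" if "u \<in> V" for u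
        by (rule phi_le1[OF fin, where k=t]) (use t nn cs v that in auto)
      have wt: "Phi C V t Lb v us * z t us \<ge> c * z (t+Lb) v"
        unfolding za c_def
        by (rule weight_bound[where p="Phi C V t Lb v" and z="z t", OF fin us])
           (use t v us zpos zmax g gam Pnn Ple in \<open>auto intro: less_imp_le\<close>)
      have "y (t+Lb) v / z (t+Lb) v \<le> hi t - c * (hi t - y t us / z t us)"
        by (rule ratio_upper[where p="Phi C V t Lb v" and V=V and us=us and z="z t" and y="y t", OF fin us _ _ ya za _ _ wt])
           (use t v us zpos Pnn hiI c0 in \<open>auto simp: \<rho>_def intro: mult_nonneg_nonneg less_imp_le\<close>)
      moreover have "lo t + c * (y t us / z t us - lo t) \<le> y (t+Lb) v / z (t+Lb) v"
        by (rule ratio_lower[where p="Phi C V t Lb v" and V=V and us=us and z="z t" and y="y t", OF fin us _ _ ya za _ _ wt])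
           (use t v us zpos Pnn loI c0 in \<open>auto simp: \<rho>_def intro: mult_nonneg_nonneg less_imp_le\<close>)
      ultimately show ?thesis by (simp add: \<rho>_def)
    qed
    have "hi (t+Lb) \<le> hi t - c * (hi t - \<rho> t us)"
      unfolding hi_def[of "t+Lb"] using fin ne bounds by auto
    moreover have "lo t + c * (\<rho> t us - lo t) \<le> lo (t+Lb)"
      unfolding lo_def[of "t+Lb"] using fin ne bounds by auto
    ultimately show ?thesis by (simp add: S_def algebra_simps)
  qed
  have c1: "c \<le> 1"
  proof -
    obtain t where "t \<ge> kz" "\<forall>v\<in>V. \<forall>u\<in>V. Phi C V t Lb v u \<ge> \<gamma>"
      using good by (metis (mono_tags, lifting) infinite_nat_iff_unbounded_le mem_Collect_eq)
    moreover obtain v where v: "v \<in> V" using ne by auto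
    moreover have "Phi C V t Lb v v \<le> 1"
      by (rule phi_le1[OF fin, where k=t]) (use calculation nn cs in auto)
    ultimately have "\<gamma> \<le> 1" by force
    then have "\<gamma> / card V \<le> 1 / 1" using cV gam
      by (intro frac_le) auto
    then show ?thesis by (simp add: c_def)
  qed
  have iter: "\<exists>K\<ge>kz. S K \<le> (1 - c) ^ n * S kz" for n
  proof (induction n)
    case 0 then show ?case by auto
  next
    case (Suc n)
    then obtain K where K: "K \<ge> kz" "S K \<le> (1 - c) ^ n * S kz" by auto
    obtain t where t: "t \<ge> K" "t \<ge> kz" "\<forall>v\<in>V. \<forall>u\<in>V. Phi C V t Lb v u \<ge> \<gamma>"
      using good by (metis (mono_tags, lifting) infinite_nat_iff_unbounded_le mem_Collect_eq)
    have "S t \<le> S K" using mono[OF K(1), of "t - K"] t by simp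
    have "S (t+Lb) \<le> (1 - c) * S t" by (rule contr) (use t in auto)
    also have "\<dots> \<le> (1 - c) * S K" using \<open>S t \<le> S K\<close> c1 by (intro mult_left_mono) auto
    also have "\<dots> \<le> (1 - c) * ((1 - c) ^ n * S kz)" using K c1 by (intro mult_left_mono) auto
    finally show ?case using t by (intro exI[of _ "t+Lb"]) auto
  qed
  have Slim: "S \<longlonglongrightarrow> 0"
  proof (rule LIMSEQ_I)
    fix r :: real assume r: "r > 0"
    have L: "(\<lambda>n. (1 - c) ^ n * S kz) \<longlonglongrightarrow> 0 * S kz"
      by (intro tendsto_mult LIMSEQ_power_zero tendsto_const) (use c0 c1 in auto)
    then obtain n where n: "(1 - c) ^ n * S kz < r"
    proof -
      from LIMSEQ_D[OF L[simplified] r] obtain no where "\<forall>n\<ge>no. norm ((1 - c) ^ n * S kz) < r" by auto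
      then have "(1 - c) ^ no * S kz < r" by auto
      then show ?thesis using that by blast
    qed
    obtain K where K: "K \<ge> kz" "S K \<le> (1 - c) ^ n * S kz" using iter by auto
    show "\<exists>no. \<forall>m\<ge>no. norm (S m - 0) < r"
    proof (intro exI allI impI)
      fix m assume "m \<ge> K"
      then have "S m \<le> S K" using mono[OF K(1), of "m - K"] by simp
      then show "norm (S m - 0) < r" using K n Snn[of m] by simp
    qed
  qed
  show ?thesis
  proof (rule Lim_null_comparison[OF _ Slim])
    show "\<forall>\<^sub>F t in sequentially. norm (y (Suc t) w / z (Suc t) w - y t w / z t w) \<le> S t"
      using eventually_ge_at_top[of kz]
    proof (rule eventually_mono)
      fix t assume t: "t \<ge> kz"
      have "lo t \<le> \<rho> (t+1) w \<and> \<rho> (t+1) w \<le> hi t" by (rule range[OF t w])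
      moreover have "lo t \<le> \<rho> t w" "\<rho> t w \<le> hi t" using loI[OF w] hiI[OF w] by auto
      ultimately show "norm (y (Suc t) w / z (Suc t) w - y t w / z t w) \<le> S t"
        by (auto simp: \<rho>_def S_def abs_if)
    qed
  qed
qed

definition VV :: "nat \<Rightarrow> (nat \<times> bool) set" where
  "VV N = nodes N \<times> UNIV"

definition Cm :: "(nat \<times> nat) set \<Rightarrow> (draw \<Rightarrow> real) \<Rightarrow> nat \<Rightarrow> nat \<times> bool \<Rightarrow> nat \<times> bool \<Rightarrow> real" where
  "Cm E \<omega> t v u = (if snd v then (if snd u then pw E \<omega> t (fst v) (fst u) else (if fst u = fst v then 1 else 0))
                    else (if snd u then (if fst u = fst v then alw E \<omega> t (fst v) else 0) else 0))"

definition Yv :: "(nat \<times> nat) set \<Rightarrow> (nat \<Rightarrow> real) \<Rightarrow> (draw \<Rightarrow> real) \<Rightarrow> nat \<Rightarrow> nat \<Rightarrow> nat \<times> bool \<Rightarrow> real" where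
  "Yv E x0 \<omega> l k v = (if snd v then xa E x0 \<omega> l k (fst v) else xb E x0 \<omega> l k (fst v))"

lemma finite_nodes[simp]: "finite (nodes N)" by (simp add: nodes_def)
lemma card_nodes[simp]: "card (nodes N) = N" by (simp add: nodes_def)

lemma Nin_sub: "digraph_on N E \<Longrightarrow> j \<in> nodes N \<Longrightarrow> Nin E j \<union> {j} \<subseteq> nodes N"
  by (auto simp: digraph_on_def Nin_def)
lemma Nout_sub: "digraph_on N E \<Longrightarrow> j \<in> nodes N \<Longrightarrow> Nout E j \<union> {j} \<subseteq> nodes N"
  by (auto simp: digraph_on_def Nout_def)
lemma Nin_not_self: "digraph_on N E \<Longrightarrow> j \<notin> Nin E j"
  by (auto simp: digraph_on_def Nin_def)
lemma Nout_not_self: "digraph_on N E \<Longrightarrow> j \<notin> Nout E j"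
  by (auto simp: digraph_on_def Nout_def)

lemma xa_0: "xa E x0 \<omega> l 0 j = init_a x0 \<omega> l j" by (simp add: xa_def)
lemma xb_0: "xb E x0 \<omega> l 0 j = init_b x0 \<omega> l j" by (simp add: xb_def)
lemma xa_Suc: "xa E x0 \<omega> l (Suc t) j = (\<Sum>m\<in>Nin E j \<union> {j}. pw E \<omega> t j m * xa E x0 \<omega> l t m) + xb E x0 \<omega> l t j"
  by (simp add: xa_def xb_def Let_def)
lemma xb_Suc: "xb E x0 \<omega> l (Suc t) j = alw E \<omega> t j * xa E x0 \<omega> l t j"
  by (simp add: xa_def xb_def Let_def)

lemma sum_VV: "(\<Sum>v\<in>VV N. f v) = (\<Sum>m\<in>nodes N. f (m, True) + f (m, False))"
proof -
  have "(\<Sum>v\<in>VV N. f v) = (\<Sum>m\<in>nodes N. \<Sum>b\<in>UNIV. f (m, b))"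
    unfolding VV_def by (simp add: sum.cartesian_product)
  also have "\<dots> = (\<Sum>m\<in>nodes N. f (m, True) + f (m, False))"
    by (simp add: UNIV_bool add.commute)
  finally show ?thesis .
qed

lemma pw_zero: "j \<notin> Nout E m \<union> {m} \<Longrightarrow> pw E \<omega> t j m = 0"
  by (simp add: pw_def)

lemma sum_pw_in:
  assumes g: "digraph_on N E" and j: "j \<in> nodes N"
  shows "(\<Sum>m\<in>nodes N. pw E \<omega> t j m * f m) = (\<Sum>m\<in>Nin E j \<union> {j}. pw E \<omega> t j m * f m)"
proof (rule sum.mono_neutral_right)
  show "Nin E j \<union> {j} \<subseteq> nodes N" using Nin_sub[OF g j] by simp
  show "\<forall>m\<in>nodes N - (Nin E j \<union> {j}). pw E \<omega> t j m * f m = 0"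
    by (auto simp: pw_def Nin_def Nout_def)
qed simp

lemma Yrec:
  assumes g: "digraph_on N E" and v: "v \<in> VV N"
  shows "Yv E x0 \<omega> l (Suc t) v = (\<Sum>u\<in>VV N. Cm E \<omega> t v u * Yv E x0 \<omega> l t u)"
proof (cases v)
  case (Pair j b)
  have j: "j \<in> nodes N" using v Pair by (simp add: VV_def)
  show ?thesis
  proof (cases b)
    case True
    have "(\<Sum>u\<in>VV N. Cm E \<omega> t v u * Yv E x0 \<omega> l t u)
        = (\<Sum>m\<in>nodes N. pw E \<omega> t j m * xa E x0 \<omega> l t m + (if m = j then xb E x0 \<omega> l t m else 0))"
      unfolding sum_VV using Pair True by (intro sum.cong) (auto simp: Cm_def Yv_def)
    also have "\<dots> = (\<Sum>m\<in>nodes N. pw E \<omega> t j m * xa E x0 \<omega> l t m) + xb E x0 \<omega> l t j"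
      using j by (simp add: sum.distrib)
    also have "\<dots> = Yv E x0 \<omega> l (Suc t) v"
      using Pair True by (simp add: Yv_def xa_Suc sum_pw_in[OF g j])
    finally show ?thesis by simp
  next
    case False
    have "(\<Sum>u\<in>VV N. Cm E \<omega> t v u * Yv E x0 \<omega> l t u)
        = (\<Sum>m\<in>nodes N. (if m = j then alw E \<omega> t j * xa E x0 \<omega> l t m else 0))"
      unfolding sum_VV using Pair False by (intro sum.cong) (auto simp: Cm_def Yv_def)
    also have "\<dots> = alw E \<omega> t j * xa E x0 \<omega> l t j"
      using j by simp
    finally show ?thesis using Pair False by (simp add: Yv_def xb_Suc)
  qed
qed

definition P1 :: "(draw \<Rightarrow> real) \<Rightarrow> bool" where
  "P1 \<omega> \<longleftrightarrow> (\<forall>t\<ge>1. \<forall>j q. 0 < \<omega> (W t j q) \<and> \<omega> (W t j q) < 1)"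

lemma wnorm_pos: "P1 \<omega> \<Longrightarrow> t \<ge> 1 \<Longrightarrow> wnorm E \<omega> t j > 0"
  unfolding wnorm_def P1_def
  by (intro add_nonneg_pos sum_nonneg) (auto intro: less_imp_le)

lemma pw_nonneg: "P1 \<omega> \<Longrightarrow> t \<ge> 1 \<Longrightarrow> pw E \<omega> t j m \<ge> 0"
  using wnorm_pos[of \<omega> t E m] unfolding pw_def P1_def
  by (auto intro!: divide_nonneg_pos less_imp_le)

lemma pw_self_pos: "P1 \<omega> \<Longrightarrow> t \<ge> 1 \<Longrightarrow> pw E \<omega> t j j > 0"
  using wnorm_pos[of \<omega> t E j] unfolding pw_def P1_def by auto

lemma alw_pos: "P1 \<omega> \<Longrightarrow> t \<ge> 1 \<Longrightarrow> alw E \<omega> t j > 0"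
  using wnorm_pos[of \<omega> t E j] unfolding alw_def P1_def by auto

lemma Cm_nonneg: "P1 \<omega> \<Longrightarrow> t \<ge> 1 \<Longrightarrow> Cm E \<omega> t v u \<ge> 0"
  unfolding Cm_def using pw_nonneg[of \<omega> t E] alw_pos[of \<omega> t E]
  by (auto intro: less_imp_le)

lemma col_sum_pw:
  assumes g: "digraph_on N E" and m: "m \<in> nodes N" and wn: "wnorm E \<omega> t m \<noteq> 0"
  shows "(\<Sum>j\<in>nodes N. pw E \<omega> t j m) + alw E \<omega> t m = 1"
proof -
  have "(\<Sum>j\<in>nodes N. pw E \<omega> t j m) = (\<Sum>j\<in>Nout E m \<union> {m}. pw E \<omega> t j m)"
    by (rule sum.mono_neutral_right) (use Nout_sub[OF g m] in \<open>auto simp: pw_def\<close>)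
  also have "\<dots> = (\<Sum>j\<in>Nout E m \<union> {m}. \<omega> (W t m (Some j)) / wnorm E \<omega> t m)"
    by (rule sum.cong) (auto simp: pw_def)
  also have "\<dots> = (\<Sum>j\<in>Nout E m \<union> {m}. \<omega> (W t m (Some j))) / wnorm E \<omega> t m"
    by (simp add: sum_divide_distrib)
  finally show ?thesis using wn unfolding alw_def
    by (simp add: add_divide_distrib[symmetric] wnorm_def)
qed

lemma Cm_colsum:
  assumes g: "digraph_on N E" and p: "P1 \<omega>" and t: "t \<ge> 1" and u: "u \<in> VV N"
  shows "(\<Sum>v\<in>VV N. Cm E \<omega> t v u) = 1"
proof (cases u)
  case (Pair m b)
  have m: "m \<in> nodes N" using u Pair by (simp add: VV_def)
  show ?thesis
  proof (cases b)
    case True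
    have "(\<Sum>v\<in>VV N. Cm E \<omega> t v u) = (\<Sum>j\<in>nodes N. pw E \<omega> t j m + (if m = j then alw E \<omega> t j else 0))"
      unfolding sum_VV using Pair True by (intro sum.cong) (auto simp: Cm_def)
    also have "\<dots> = (\<Sum>j\<in>nodes N. pw E \<omega> t j m) + alw E \<omega> t m"
      using m by (simp add: sum.distrib)
    also have "\<dots> = 1" using col_sum_pw[OF g m] wnorm_pos[OF p t, of E m] by simp
    finally show ?thesis .
  next
    case False
    have "(\<Sum>v\<in>VV N. Cm E \<omega> t v u) = (\<Sum>j\<in>nodes N. (if m = j then 1 else 0))"
      unfolding sum_VV using Pair False by (intro sum.cong) (auto simp: Cm_def)
    also have "\<dots> = 1" using m by simp
    finally show ?thesis .
  qed
qed

lemma z_pos_aux: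
  assumes g: "digraph_on N E" and p: "P1 \<omega>" and t: "t \<ge> 1"
  shows "\<forall>j\<in>nodes N. xa E x0 \<omega> 2 t j > 0 \<and> xb E x0 \<omega> 2 t j \<ge> 0 \<and> (t \<ge> 2 \<longrightarrow> xb E x0 \<omega> 2 t j > 0)"
  using t
proof (induction t rule: dec_induct)
  case base
  show ?case by (simp add: xa_Suc xb_Suc xa_0 xb_0 init_a_def init_b_def)
next
  case (step t)
  show ?case
  proof
    fix j assume j: "j \<in> nodes N"
    have t1: "t \<ge> 1" using step by simp
    have "pw E \<omega> t j j * xa E x0 \<omega> 2 t j \<le> (\<Sum>m\<in>Nin E j \<union> {j}. pw E \<omega> t j m * xa E x0 \<omega> 2 t m)"
    proof (rule member_le_sum[where f="\<lambda>m. pw E \<omega> t j m * xa E x0 \<omega> 2 t m"])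
      show "finite (Nin E j \<union> {j})" by (rule finite_subset[OF Nin_sub[OF g j]]) simp
      fix m assume m: "m \<in> Nin E j \<union> {j} - {j}"
      then have "m \<in> nodes N" using Nin_sub[OF g j] by blast
      then have "xa E x0 \<omega> 2 t m > 0" using step.IH by blast
      then show "0 \<le> pw E \<omega> t j m * xa E x0 \<omega> 2 t m"
        using pw_nonneg[OF p t1, of E j m] by simp
    qed simp
    moreover have "pw E \<omega> t j j * xa E x0 \<omega> 2 t j > 0"
      using pw_self_pos[OF p t1] step.IH j by simp
    ultimately have a: "xa E x0 \<omega> 2 (Suc t) j > 0"
      using step.IH j by (simp add: xa_Suc add_pos_nonneg)
    have b: "xb E x0 \<omega> 2 (Suc t) j > 0"
      using alw_pos[OF p t1] step.IH j by (simp add: xb_Suc)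
    show "xa E x0 \<omega> 2 (Suc t) j > 0 \<and> xb E x0 \<omega> 2 (Suc t) j \<ge> 0 \<and> (Suc t \<ge> 2 \<longrightarrow> xb E x0 \<omega> 2 (Suc t) j > 0)"
      using a b by simp
  qed
qed

lemma z_pos:
  assumes g: "digraph_on N E" and p: "P1 \<omega>" and t: "t \<ge> 2" and v: "v \<in> VV N"
  shows "Yv E x0 \<omega> 2 t v > 0"
  using z_pos_aux[OF g p, of t x0] t v by (auto simp: Yv_def VV_def)

lemma z_nonneg:
  assumes g: "digraph_on N E" and p: "P1 \<omega>" and t: "t \<ge> 1" and v: "v \<in> VV N"
  shows "Yv E x0 \<omega> 2 t v \<ge> 0"
  using z_pos_aux[OF g p t, of x0] t v by (auto simp: Yv_def VV_def intro: less_imp_le)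

lemma z_total:
  assumes g: "digraph_on N E" and p: "P1 \<omega>" and t: "t \<ge> 1"
  shows "(\<Sum>v\<in>VV N. Yv E x0 \<omega> l t v) = (\<Sum>v\<in>VV N. Yv E x0 \<omega> l 1 v)"
  using t
proof (induction t rule: dec_induct)
  case base then show ?case by simp
next
  case (step t)
  have "(\<Sum>v\<in>VV N. Yv E x0 \<omega> l (Suc t) v) = (\<Sum>v\<in>VV N. \<Sum>u\<in>VV N. Cm E \<omega> t v u * Yv E x0 \<omega> l t u)"
    using Yrec[OF g] by (intro sum.cong) auto
  also have "\<dots> = (\<Sum>u\<in>VV N. Yv E x0 \<omega> l t u * (\<Sum>v\<in>VV N. Cm E \<omega> t v u))"
    by (subst sum.swap) (simp add: sum_distrib_left mult.commute)
  also have "\<dots> = (\<Sum>u\<in>VV N. Yv E x0 \<omega> l t u)"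
    using Cm_colsum[OF g p] step by (intro sum.cong) auto
  finally show ?case using step by simp
qed

definition SRel :: "nat \<Rightarrow> (nat \<times> nat) set \<Rightarrow> ((nat \<times> bool) \<times> (nat \<times> bool)) set" where
  "SRel N E = {((m,True),(j,True)) | m j. m \<in> nodes N \<and> j \<in> nodes N \<and> ((j,m) \<in> E \<or> j = m)}"

definition Rel :: "nat \<Rightarrow> (nat \<times> nat) set \<Rightarrow> ((nat \<times> bool) \<times> (nat \<times> bool)) set" where
  "Rel N E = SRel N E \<union> {((j,True),(j,False)) | j. j \<in> nodes N} \<union> {((j,False),(j,True)) | j. j \<in> nodes N}"

lemma uniform_len:
  assumes fin: "finite V" and refl: "\<And>v. v \<in> V \<Longrightarrow> (v,v) \<in> S"
    and conn: "\<And>u v. u \<in> V \<Longrightarrow> v \<in> V \<Longrightarrow> (u,v) \<in> S\<^sup>*"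
  shows "\<exists>L. \<forall>u\<in>V. \<forall>v\<in>V. (u,v) \<in> S ^^ L"
proof -
  define f where "f p = (SOME n. p \<in> S ^^ n)" for p
  have fp: "p \<in> S ^^ f p" if "p \<in> V \<times> V" for p
  proof -
    obtain u v where p0: "p = (u,v)" by (cases p)
    then have p: "p = (u,v)" "u \<in> V" "v \<in> V" using that by auto
    then have "\<exists>n. p \<in> S ^^ n" using conn[of u v] by (simp add: rtrancl_power)
    then show ?thesis unfolding f_def by (rule someI_ex)
  qed
  define L where "L = Max (f ` (V \<times> V))"
  have loop: "(v,v) \<in> S ^^ k" if "v \<in> V" for v k
    by (induction k) (auto intro: relpow_Suc_I refl[OF that])
  have "(u,v) \<in> S ^^ L" if u: "u \<in> V" and v: "v \<in> V" for u v
  proof -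
    have le: "f (u,v) \<le> L" unfolding L_def using fin u v by (intro Max_ge) auto
    have "(u,v) \<in> S ^^ f (u,v) O S ^^ (L - f (u,v))"
      using fp[of "(u,v)"] loop[OF v] u v by auto
    also have "\<dots> = S ^^ (f (u,v) + (L - f (u,v)))" by (simp add: relpow_add)
    finally show ?thesis using le by simp
  qed
  then show ?thesis by blast
qed

lemma relpow_mono_sub:
  fixes S R :: "('a \<times> 'a) set"
  assumes "S \<subseteq> R" shows "S ^^ n \<subseteq> R ^^ n"
proof (induction n)
  case 0 then show ?case by simp
next
  case (Suc n) then show ?case by (simp add: relcomp_mono assms)
qed

lemma S_star:
  assumes g: "digraph_on N E" and ab: "(a,b) \<in> E\<^sup>*" and a: "a \<in> nodes N"
  shows "((b,True),(a,True)) \<in> (SRel N E)\<^sup>*"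
  using ab
proof (induction rule: rtrancl_induct)
  case base then show ?case by simp
next
  case (step b c)
  have "b \<in> nodes N" "c \<in> nodes N" using step(2) g by (auto simp: digraph_on_def)
  then have "((c,True),(b,True)) \<in> SRel N E" using step(2) by (auto simp: SRel_def)
  then show ?case using step(3) by (rule converse_rtrancl_into_rtrancl)
qed

lemma R_paths:
  assumes g: "digraph_on N E" and sc: "strongly_connected N E"
  shows "\<exists>L. \<forall>u\<in>VV N. \<forall>v\<in>VV N. (u,v) \<in> (Rel N E) ^^ L"
proof -
  have "\<exists>L. \<forall>u\<in>nodes N \<times> {True}. \<forall>v\<in>nodes N \<times> {True}. (u,v) \<in> (SRel N E) ^^ L"
  proof (rule uniform_len)
    show "finite (nodes N \<times> {True})" by simp
    fix v assume "v \<in> nodes N \<times> {True}" then show "(v,v) \<in> SRel N E" by (auto simp: SRel_def)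
  next
    fix u v assume "u \<in> nodes N \<times> {True}" "v \<in> nodes N \<times> {True}"
    then show "(u,v) \<in> (SRel N E)\<^sup>*"
      using S_star[OF g, of "fst v" "fst u"] sc by (auto simp: strongly_connected_def)
  qed
  then obtain L where L: "\<forall>u\<in>nodes N \<times> {True}. \<forall>v\<in>nodes N \<times> {True}. (u,v) \<in> (SRel N E) ^^ L" by blast
  have "(u,v) \<in> (Rel N E) ^^ Suc (Suc L)" if u: "u \<in> VV N" and v: "v \<in> VV N" for u v
  proof -
    obtain a b c d where ab: "u = (a,b)" "a \<in> nodes N" and cd: "v = (c,d)" "c \<in> nodes N"
      using u v by (auto simp: VV_def)
    have 1: "(u,(a,True)) \<in> Rel N E" using ab by (cases b) (auto simp: Rel_def SRel_def)
    have 3: "((c,True),v) \<in> Rel N E" using cd by (cases d) (auto simp: Rel_def SRel_def)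
    have "((a,True),(c,True)) \<in> (SRel N E) ^^ L" using L ab cd by auto
    then have 2: "((a,True),(c,True)) \<in> (Rel N E) ^^ L"
      using relpow_mono_sub[of "SRel N E" "Rel N E" L] by (auto simp: Rel_def)
    show ?thesis by (rule relpow_Suc_I2[OF 1 relpow_Suc_I[OF 2 3]])
  qed
  then show ?thesis by blast
qed

lemma Rel_sub: "Rel N E \<subseteq> VV N \<times> VV N"
  by (auto simp: Rel_def SRel_def VV_def)

definition goodb :: "nat \<Rightarrow> (draw \<Rightarrow> real) \<Rightarrow> nat \<Rightarrow> nat \<Rightarrow> bool" where
  "goodb N \<omega> t L \<longleftrightarrow> (\<forall>s<L. \<forall>j\<in>nodes N. \<forall>q\<in>insert None (Some ` nodes N). 1/2 \<le> \<omega> (W (t+s) j q))"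

lemma wnorm_le:
  assumes g: "digraph_on N E" and p: "P1 \<omega>" and t: "t \<ge> 1" and m: "m \<in> nodes N"
  shows "wnorm E \<omega> t m \<le> N + 1"
proof -
  have "(\<Sum>j\<in>Nout E m \<union> {m}. \<omega> (W t m (Some j))) \<le> of_nat (card (Nout E m \<union> {m})) * 1"
    by (rule sum_bounded_above) (use p t in \<open>auto simp: P1_def less_imp_le\<close>)
  also have "card (Nout E m \<union> {m}) \<le> N"
    using card_mono[OF finite_nodes Nout_sub[OF g m]] by simp
  finally have "(\<Sum>j\<in>Nout E m \<union> {m}. \<omega> (W t m (Some j))) \<le> N" by simp
  moreover have "\<omega> (W t m None) \<le> 1" using p t by (auto simp: P1_def less_imp_le)
  ultimately show ?thesis unfolding wnorm_def by simp
qed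

lemma frac_lb:
  assumes "a \<ge> 1/2" "0 < w" "w \<le> real N + 1"
  shows "a / w \<ge> 1 / (2 * (real N + 1))"
proof -
  have "(1/2) / (real N + 1) \<le> a / w" by (rule frac_le) (use assms in auto)
  then show ?thesis by simp
qed

lemma edge_lb:
  assumes g: "digraph_on N E" and p: "P1 \<omega>" and t: "t \<ge> 1"
    and gd: "\<forall>j\<in>nodes N. \<forall>q\<in>insert None (Some ` nodes N). 1/2 \<le> \<omega> (W t j q)"
    and uv: "(u,v) \<in> Rel N E"
  shows "Cm E \<omega> t v u \<ge> 1 / (2 * (real N + 1))"
proof -
  have "1 / (2 * (real N + 1)) \<le> 1" by (simp add: field_simps)
  note one = this
  consider (S) m j where "u = (m,True)" "v = (j,True)" "m \<in> nodes N" "j \<in> nodes N" "(j,m) \<in> E \<or> j = m"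
    | (A) j where "u = (j,True)" "v = (j,False)" "j \<in> nodes N"
    | (B) j where "u = (j,False)" "v = (j,True)" "j \<in> nodes N"
    using uv by (auto simp: Rel_def SRel_def)
  then show ?thesis
  proof cases
    case S
    then have "pw E \<omega> t j m = \<omega> (W t m (Some j)) / wnorm E \<omega> t m"
      by (auto simp: pw_def Nout_def)
    moreover have "wnorm E \<omega> t m \<le> real N + 1" using wnorm_le[OF g p t S(3)] by simp
    moreover have "1 / (2 * (real N + 1)) \<le> \<omega> (W t m (Some j)) / wnorm E \<omega> t m"
      by (rule frac_lb) (use gd S wnorm_pos[OF p t] calculation(2) in auto)
    ultimately show ?thesis using S by (simp add: Cm_def del: One_nat_def)
  next
    case A
    have "wnorm E \<omega> t j \<le> real N + 1" using wnorm_le[OF g p t A(3)] by simp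
    then have "1 / (2 * (real N + 1)) \<le> \<omega> (W t j None) / wnorm E \<omega> t j"
      by (intro frac_lb) (use gd A wnorm_pos[OF p t] in auto)
    then show ?thesis using A by (simp add: Cm_def alw_def)
  next
    case B
    then show ?thesis using one by (simp add: Cm_def)
  qed
qed

lemma ratio_conv:
  assumes g: "digraph_on N E" and p: "P1 \<omega>"
    and L: "\<forall>u\<in>VV N. \<forall>v\<in>VV N. (u,v) \<in> (Rel N E) ^^ L"
    and inf: "infinite {t. t \<ge> 2 \<and> goodb N \<omega> t L}"
    and i: "i \<in> nodes N"
  shows "(\<lambda>t. xa E x0 \<omega> 1 (Suc t) i / xa E x0 \<omega> 2 (Suc t) i - xa E x0 \<omega> 1 t i / xa E x0 \<omega> 2 t i) \<longlonglongrightarrow> 0"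
proof -
  define \<delta> where "\<delta> = 1 / (2 * (real N + 1))"
  have d0: "\<delta> > 0" unfolding \<delta>_def by simp
  have sub: "{t. t \<ge> 2 \<and> goodb N \<omega> t L} \<subseteq> {t. t \<ge> 2 \<and> (\<forall>v\<in>VV N. \<forall>u\<in>VV N. Phi (Cm E \<omega>) (VV N) t L v u \<ge> \<delta> ^ L)}"
  proof safe
    fix t v u assume t: "t \<ge> 2" and gd: "goodb N \<omega> t L" and v: "v \<in> VV N" and u: "u \<in> VV N"
    show "Phi (Cm E \<omega>) (VV N) t L v u \<ge> \<delta> ^ L"
    proof (rule phi_path[where R="Rel N E"])
      show "\<And>ta v u. t \<le> ta \<Longrightarrow> 0 \<le> Cm E \<omega> ta v u" using Cm_nonneg[OF p] t by auto
      show "finite (VV N)" by (simp add: VV_def)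
      show "Rel N E \<subseteq> VV N \<times> VV N" by (rule Rel_sub)
      show "0 \<le> \<delta>" using d0 by simp
      show "(u, v) \<in> Rel N E ^^ L" using L u v by auto
      show "u \<in> VV N" by fact
      fix ta u v assume ta: "t \<le> ta" "ta < t + L" and uv: "(u,v) \<in> Rel N E"
      have "\<forall>j\<in>nodes N. \<forall>q\<in>insert None (Some ` nodes N). 1/2 \<le> \<omega> (W ta j q)"
        using gd ta unfolding goodb_def by (metis add_diff_inverse_nat add_less_cancel_left not_le)
      then show "\<delta> \<le> Cm E \<omega> ta v u" unfolding \<delta>_def
        using edge_lb[OF g p _ _ uv] t ta by auto
    qed
  qed
  have "(\<lambda>t. Yv E x0 \<omega> 1 (Suc t) (i,True) / Yv E x0 \<omega> 2 (Suc t) (i,True) - Yv E x0 \<omega> 1 t (i,True) / Yv E x0 \<omega> 2 t (i,True)) \<longlonglongrightarrow> 0"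
  proof (rule contraction_conv[where V="VV N" and C="Cm E \<omega>" and kz=2 and Lb=L and \<gamma>="\<delta>^L"])
    show "finite (VV N)" by (simp add: VV_def)
    show "VV N \<noteq> {}" using i by (auto simp: VV_def)
    show "\<And>t v. v \<in> VV N \<Longrightarrow> Yv E x0 \<omega> 1 (Suc t) v = (\<Sum>u\<in>VV N. Cm E \<omega> t v u * Yv E x0 \<omega> 1 t u)"
      by (rule Yrec[OF g])
    show "\<And>t v. v \<in> VV N \<Longrightarrow> Yv E x0 \<omega> 2 (Suc t) v = (\<Sum>u\<in>VV N. Cm E \<omega> t v u * Yv E x0 \<omega> 2 t u)"
      by (rule Yrec[OF g])
    show "\<And>t v u. 2 \<le> t \<Longrightarrow> 0 \<le> Cm E \<omega> t v u" using Cm_nonneg[OF p] by auto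
    show "\<And>t u. 2 \<le> t \<Longrightarrow> u \<in> VV N \<Longrightarrow> (\<Sum>v\<in>VV N. Cm E \<omega> t v u) = 1"
      using Cm_colsum[OF g p] by auto
    show "\<And>t v. 2 \<le> t \<Longrightarrow> v \<in> VV N \<Longrightarrow> 0 < Yv E x0 \<omega> 2 t v"
      using z_pos[OF g p] by auto
    show "infinite {t. 2 \<le> t \<and> (\<forall>v\<in>VV N. \<forall>u\<in>VV N. \<delta> ^ L \<le> Phi (Cm E \<omega>) (VV N) t L v u)}"
      using infinite_super[OF sub inf] by simp
    show "0 < \<delta> ^ L" using d0 by simp
    show "(i, True) \<in> VV N" using i by (simp add: VV_def)
  qed
  then show ?thesis by (simp add: Yv_def)
qed

lemma xb_bounded:
  assumes g: "digraph_on N E" and p: "P1 \<omega>" and t: "t \<ge> 1" and i: "i \<in> nodes N"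
  shows "xb E x0 \<omega> 2 t i \<le> (\<Sum>v\<in>VV N. Yv E x0 \<omega> 2 1 v)"
proof -
  have "xb E x0 \<omega> 2 t i = Yv E x0 \<omega> 2 t (i,False)" by (simp add: Yv_def)
  also have "\<dots> \<le> (\<Sum>v\<in>VV N. Yv E x0 \<omega> 2 t v)"
    by (rule member_le_sum) (use z_nonneg[OF g p t] i in \<open>auto simp: VV_def\<close>)
  also have "\<dots> = (\<Sum>v\<in>VV N. Yv E x0 \<omega> 2 1 v)" by (rule z_total[OF g p t])
  finally show ?thesis .
qed

definition getv :: "(obs \<Rightarrow> real option) \<Rightarrow> obs \<Rightarrow> real" where
  "getv I ob = the (I ob)"

definition Dsum :: "(nat \<times> nat) set \<Rightarrow> nat \<Rightarrow> (obs \<Rightarrow> real option) \<Rightarrow> nat \<Rightarrow> nat \<Rightarrow> real" where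
  "Dsum E i I l k = (\<Sum>t<k. (\<Sum>j\<in>Nin E i. getv I (OP t i j) * getv I (OXa t j l))
                          - (\<Sum>a\<in>Nout E i. getv I (OM t a i l)))"

definition Fest :: "(nat \<times> nat) set \<Rightarrow> nat \<Rightarrow> nat \<Rightarrow> nat \<Rightarrow> (obs \<Rightarrow> real option) \<Rightarrow> real" where
  "Fest E i a0 k I = ((getv I (OM k a0 i 1) / getv I (OM k a0 i 2)) * (2 + Dsum E i I 2 k) - Dsum E i I 1 k) / 2"

lemma sum_Nout_self:
  assumes g: "digraph_on N E" and i: "i \<in> nodes N" and wn: "wnorm E \<omega> t i \<noteq> 0"
  shows "(\<Sum>a\<in>Nout E i. pw E \<omega> t a i) + pw E \<omega> t i i + alw E \<omega> t i = 1"
proof -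
  have "Nout E i \<subseteq> nodes N" using Nout_sub[OF g i] by auto
  then have fin: "finite (Nout E i)" using finite_subset finite_nodes by blast
  have "(\<Sum>j\<in>nodes N. pw E \<omega> t j i) = (\<Sum>j\<in>Nout E i \<union> {i}. pw E \<omega> t j i)"
    by (rule sum.mono_neutral_right) (use Nout_sub[OF g i] in \<open>auto simp: pw_def\<close>)
  also have "\<dots> = (\<Sum>a\<in>Nout E i. pw E \<omega> t a i) + pw E \<omega> t i i"
    using fin Nout_not_self[OF g, of i] by simp
  finally show ?thesis using col_sum_pw[OF g i wn] by simp
qed

lemma mass_step:
  assumes g: "digraph_on N E" and i: "i \<in> nodes N" and wn: "wnorm E \<omega> t i \<noteq> 0"
  shows "xa E x0 \<omega> l (Suc t) i + xb E x0 \<omega> l (Suc t) i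
       = xa E x0 \<omega> l t i + xb E x0 \<omega> l t i
         + ((\<Sum>j\<in>Nin E i. pw E \<omega> t i j * xa E x0 \<omega> l t j) - (\<Sum>a\<in>Nout E i. pw E \<omega> t a i * xa E x0 \<omega> l t i))"
proof -
  have "Nin E i \<subseteq> nodes N" using Nin_sub[OF g i] by auto
  then have fin: "finite (Nin E i)" using finite_subset finite_nodes by blast
  have s1: "(\<Sum>m\<in>Nin E i \<union> {i}. pw E \<omega> t i m * xa E x0 \<omega> l t m) = (\<Sum>j\<in>Nin E i. pw E \<omega> t i j * xa E x0 \<omega> l t j) + pw E \<omega> t i i * xa E x0 \<omega> l t i"
    using sum.insert[OF fin Nin_not_self[OF g, of i], of "\<lambda>m. pw E \<omega> t i m * xa E x0 \<omega> l t m"]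
    by simp
  have s2: "(\<Sum>a\<in>Nout E i. pw E \<omega> t a i * xa E x0 \<omega> l t i) = (\<Sum>a\<in>Nout E i. pw E \<omega> t a i) * xa E x0 \<omega> l t i"
    by (simp add: sum_distrib_right)
  have s3: "pw E \<omega> t i i + alw E \<omega> t i = 1 - (\<Sum>a\<in>Nout E i. pw E \<omega> t a i)"
    using sum_Nout_self[OF g i wn] by simp
  have "xa E x0 \<omega> l (Suc t) i + xb E x0 \<omega> l (Suc t) i
      = (\<Sum>j\<in>Nin E i. pw E \<omega> t i j * xa E x0 \<omega> l t j) + xb E x0 \<omega> l t i + (pw E \<omega> t i i + alw E \<omega> t i) * xa E x0 \<omega> l t i"
    by (simp only: xa_Suc xb_Suc s1) (simp add: algebra_simps)
  also have "\<dots> = xa E x0 \<omega> l t i + xb E x0 \<omega> l t i + ((\<Sum>j\<in>Nin E i. pw E \<omega> t i j * xa E x0 \<omega> l t j) - (\<Sum>a\<in>Nout E i. pw E \<omega> t a i) * xa E x0 \<omega> l t i)"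
    by (simp only: s3) (simp add: algebra_simps)
  finally show ?thesis by (simp only: s2)
qed


lemma mass_sum:
  assumes g: "digraph_on N E" and i: "i \<in> nodes N" and wn: "\<And>t. t < k \<Longrightarrow> wnorm E \<omega> t i \<noteq> 0"
  shows "xa E x0 \<omega> l k i + xb E x0 \<omega> l k i
       = xa E x0 \<omega> l 0 i + xb E x0 \<omega> l 0 i
         + (\<Sum>t<k. (\<Sum>j\<in>Nin E i. pw E \<omega> t i j * xa E x0 \<omega> l t j) - (\<Sum>a\<in>Nout E i. pw E \<omega> t a i * xa E x0 \<omega> l t i))"
  using wn
proof (induction k)
  case 0 then show ?case by simp
next
  case (Suc k)
  show ?case using mass_step[OF g i Suc.prems[of k], of x0 l] Suc.IH Suc.prems by simp
qed

lemma info_vals: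
  assumes i: "i \<in> nodes N" and A: "Nout E i \<union> Nin E i \<subseteq> A" and t: "t \<le> k" and l: "l \<in> {1,2}"
  shows "j \<in> Nin E i \<Longrightarrow> getv (info N E A x0 \<omega> k) (OP t i j) = pw E \<omega> t i j"
    and "j \<in> Nin E i \<Longrightarrow> getv (info N E A x0 \<omega> k) (OXa t j l) = xa E x0 \<omega> l t j"
    and "a \<in> Nout E i \<Longrightarrow> getv (info N E A x0 \<omega> k) (OM t a i l) = pw E \<omega> t a i * xa E x0 \<omega> l t i"
  using assms by (auto simp: getv_def info_def Nin_def Nout_def)

lemma Dsum_eval:
  assumes i: "i \<in> nodes N" and A: "Nout E i \<union> Nin E i \<subseteq> A" and l: "l \<in> {1,2}"
  shows "Dsum E i (info N E A x0 \<omega> k) l k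
       = (\<Sum>t<k. (\<Sum>j\<in>Nin E i. pw E \<omega> t i j * xa E x0 \<omega> l t j) - (\<Sum>a\<in>Nout E i. pw E \<omega> t a i * xa E x0 \<omega> l t i))"
  unfolding Dsum_def
  by (intro sum.cong refl arg_cong2[where f="(-)"]) (auto simp: info_vals[OF i A _ l])

lemma Fest_eq:
  assumes g: "digraph_on N E" and p: "P1 \<omega>" and i: "i \<in> nodes N"
    and A: "Nout E i \<union> Nin E i \<subseteq> A" and a0: "a0 \<in> Nout E i"
    and w0: "wnorm E \<omega> 0 i \<noteq> 0" and t: "t \<ge> 1"
  shows "Fest E i a0 (Suc t) (info N E A x0 \<omega> (Suc t)) - x0 i
       = (xa E x0 \<omega> 1 (Suc t) i / xa E x0 \<omega> 2 (Suc t) i - xa E x0 \<omega> 1 t i / xa E x0 \<omega> 2 t i)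
         * xb E x0 \<omega> 2 (Suc t) i / 2"
proof -
  let ?I = "info N E A x0 \<omega> (Suc t)"
  have wn: "wnorm E \<omega> s i \<noteq> 0" for s
    using w0 wnorm_pos[OF p, of s E i] by (cases "s = 0") auto
  have pwpos: "pw E \<omega> (Suc t) a0 i > 0"
    using a0 wnorm_pos[OF p, of "Suc t" E i] p by (auto simp: pw_def P1_def)
  have za: "xa E x0 \<omega> 2 s i > 0" if "s \<ge> 1" for s
    using z_pos_aux[OF g p that, of x0] i by auto
  define r where "r s = xa E x0 \<omega> 1 s i / xa E x0 \<omega> 2 s i" for s
  have R: "getv ?I (OM (Suc t) a0 i 1) / getv ?I (OM (Suc t) a0 i 2) = r (Suc t)"
    using info_vals(3)[OF i A le_refl, of 1 a0] info_vals(3)[OF i A le_refl, of 2 a0] a0 pwpos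
    by (simp add: r_def)
  have D2: "2 + Dsum E i ?I 2 (Suc t) = xa E x0 \<omega> 2 (Suc t) i + xb E x0 \<omega> 2 (Suc t) i"
    using mass_sum[OF g i, of "Suc t" \<omega> x0 2] wn Dsum_eval[OF i A, of 2 x0 \<omega> "Suc t"]
    by (simp add: xa_0 xb_0 init_a_def init_b_def)
  have D1: "Dsum E i ?I 1 (Suc t) = xa E x0 \<omega> 1 (Suc t) i + xb E x0 \<omega> 1 (Suc t) i - 2 * x0 i"
    using mass_sum[OF g i, of "Suc t" \<omega> x0 1] wn Dsum_eval[OF i A, of 1 x0 \<omega> "Suc t"]
    by (simp add: xa_0 xb_0 init_a_def init_b_def)
  have a1: "xa E x0 \<omega> 1 (Suc t) i = r (Suc t) * xa E x0 \<omega> 2 (Suc t) i"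
    using za[of "Suc t"] by (simp add: r_def)
  have b1: "xb E x0 \<omega> 1 (Suc t) i = r t * xb E x0 \<omega> 2 (Suc t) i"
    using za[OF t] by (simp add: r_def xb_Suc)
  have "Fest E i a0 (Suc t) ?I = (r (Suc t) * (xa E x0 \<omega> 2 (Suc t) i + xb E x0 \<omega> 2 (Suc t) i)
          - (r (Suc t) * xa E x0 \<omega> 2 (Suc t) i + r t * xb E x0 \<omega> 2 (Suc t) i - 2 * x0 i)) / 2"
    unfolding Fest_def R D2 D1 a1 b1 ..
  then have X: "Fest E i a0 (Suc t) ?I - x0 i = (r (Suc t) - r t) * xb E x0 \<omega> 2 (Suc t) i / 2"
    by (simp add: field_simps)
  then show ?thesis by (simp add: r_def)
qed

lemma det_main:
  assumes g: "digraph_on N E" and p: "P1 \<omega>" and i: "i \<in> nodes N"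
    and A: "Nout E i \<union> Nin E i \<subseteq> A" and a0: "a0 \<in> Nout E i"
    and w0: "wnorm E \<omega> 0 i \<noteq> 0"
    and L: "\<forall>u\<in>VV N. \<forall>v\<in>VV N. (u,v) \<in> (Rel N E) ^^ L"
    and inf: "infinite {t. t \<ge> 2 \<and> goodb N \<omega> t L}"
  shows "(\<lambda>k. Fest E i a0 k (info N E A x0 \<omega> k)) \<longlonglongrightarrow> x0 i"
proof -
  define r where "r s = xa E x0 \<omega> 1 s i / xa E x0 \<omega> 2 s i" for s
  define B where "B = (\<Sum>v\<in>VV N. Yv E x0 \<omega> 2 1 v)"
  have rc: "(\<lambda>t. r (Suc t) - r t) \<longlonglongrightarrow> 0"
    unfolding r_def by (rule ratio_conv[OF g p L inf i])
  have bnd: "(\<lambda>t. \<bar>r (Suc t) - r t\<bar> * B / 2) \<longlonglongrightarrow> 0"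
  proof -
    have "(\<lambda>t. \<bar>r (Suc t) - r t\<bar> * (B / 2)) \<longlonglongrightarrow> 0 * (B / 2)"
      by (intro tendsto_mult tendsto_const tendsto_rabs_zero rc)
    then show ?thesis by (simp add: mult.assoc)
  qed
  have "(\<lambda>t. Fest E i a0 (Suc t) (info N E A x0 \<omega> (Suc t)) - x0 i) \<longlonglongrightarrow> 0"
  proof (rule Lim_null_comparison[OF _ bnd])
    show "\<forall>\<^sub>F t in sequentially. norm (Fest E i a0 (Suc t) (info N E A x0 \<omega> (Suc t)) - x0 i) \<le> \<bar>r (Suc t) - r t\<bar> * B / 2"
      using eventually_ge_at_top[of 1]
    proof (rule eventually_mono)
      fix t :: nat assume t: "t \<ge> 1"
      have xb0: "0 \<le> xb E x0 \<omega> 2 (Suc t) i" "xb E x0 \<omega> 2 (Suc t) i \<le> B"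
        using z_pos_aux[OF g p, of "Suc t" x0] i xb_bounded[OF g p _ i, of "Suc t" x0] t
        by (auto simp: B_def)
      have E: "Fest E i a0 (Suc t) (info N E A x0 \<omega> (Suc t)) - x0 i = (r (Suc t) - r t) * xb E x0 \<omega> 2 (Suc t) i / 2"
        using Fest_eq[OF g p i A a0 w0 t, of x0] by (simp add: r_def)
      have "norm (Fest E i a0 (Suc t) (info N E A x0 \<omega> (Suc t)) - x0 i)
          = \<bar>r (Suc t) - r t\<bar> * xb E x0 \<omega> 2 (Suc t) i / 2"
        unfolding E using xb0 by (simp add: abs_mult)
      also have "\<dots> \<le> \<bar>r (Suc t) - r t\<bar> * B / 2"
        using xb0 by (intro divide_right_mono mult_left_mono) auto
      finally show "norm (Fest E i a0 (Suc t) (info N E A x0 \<omega> (Suc t)) - x0 i) \<le> \<bar>r (Suc t) - r t\<bar> * B / 2" .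
    qed
  qed
  then have "(\<lambda>t. Fest E i a0 (Suc t) (info N E A x0 \<omega> (Suc t))) \<longlonglongrightarrow> x0 i"
    by (simp add: Lim_null[symmetric])
  then show ?thesis by (rule LIMSEQ_imp_Suc)
qed

lemma dd_prob:
  assumes M: "M > 0"
  shows "prob_space (draw_distr M d)"
proof (cases d)
  case (XInit x)
  have "emeasure lborel {-M<..<M} = ennreal (2 * M)" using M by simp
  then show ?thesis using XInit M
    by (auto simp: draw_distr_def intro!: prob_space_uniform_measure)
next
  case (W k j q)
  show ?thesis
  proof (cases "k = 0")
    case True then show ?thesis using W prob_space_normal_density[where \<sigma>="sqrt M" and \<mu>=0] M by (simp add: draw_distr_def)
  next
    case False then show ?thesis using W
      by (auto simp: draw_distr_def intro!: prob_space_uniform_measure)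
  qed
qed

lemma sets_dd[measurable_cong]: "sets (draw_distr M d) = sets borel"
  by (cases d) (auto simp: draw_distr_def)

lemma pp_prob: "M > 0 \<Longrightarrow> prob_space (pp_space M)"
  unfolding pp_space_def by (rule prob_space_PiM) (rule dd_prob)

lemma AE_comp:
  assumes M: "M > 0" and ae: "AE x in draw_distr M d. P x"
  shows "AE \<omega> in pp_space M. P (\<omega> d)"
  unfolding pp_space_def by (rule AE_PiM_component) (use dd_prob[OF M] ae in auto)

lemma P1_AE:
  assumes M: "M > 0"
  shows "AE \<omega> in pp_space M. P1 \<omega>"
proof -
  have "AE \<omega> in pp_space M. 0 < \<omega> (W t j q) \<and> \<omega> (W t j q) < 1" if t: "t \<ge> 1" for t j q
  proof (rule AE_comp[OF M])
    have eq: "draw_distr M (W t j q) = uniform_measure lborel {0<..<1}"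
      using t by (simp add: draw_distr_def)
    have ae: "AE x in uniform_measure lborel {0<..<(1::real)}. 0 < x \<and> x < 1"
      by (subst AE_uniform_measure) auto
    show "AE x in draw_distr M (W t j q). 0 < x \<and> x < 1" unfolding eq by (rule ae)
  qed
  then have A: "AE \<omega> in pp_space M. t \<ge> 1 \<longrightarrow> 0 < \<omega> (W t j q) \<and> \<omega> (W t j q) < 1" for t j q
    by (cases "t \<ge> 1") auto
  have "AE \<omega> in pp_space M. \<forall>t j q. t \<ge> 1 \<longrightarrow> 0 < \<omega> (W t j q) \<and> \<omega> (W t j q) < 1"
    by (simp only: AE_all_countable) (use A in blast)
  then show ?thesis by (rule eventually_mono) (auto simp: P1_def)
qed


lemma w0_AE:
  assumes M: "M > 0"
  shows "AE \<omega> in pp_space M. wnorm E \<omega> 0 i \<noteq> 0"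
proof -
  define MM where "MM = draw_distr M"
  define d0 where "d0 = W 0 i None"
  define I where "I = UNIV - {d0}"
  have pr: "prob_space (MM d)" for d unfolding MM_def by (rule dd_prob[OF M])
  have pair: "distr (MM d0 \<Otimes>\<^sub>M PiM I MM) (PiM (insert d0 I) MM) (\<lambda>(x,X). X(d0:=x)) = PiM (insert d0 I) MM"
    by (rule distr_pair_PiM_eq_PiM) (use pr in auto)
  have ins: "insert d0 I = UNIV" by (auto simp: I_def)
  interpret M1: prob_space "MM d0" by (rule pr)
  interpret M2: prob_space "PiM I MM" by (rule prob_space_PiM) (rule pr)
  interpret P2: pair_sigma_finite "MM d0" "PiM I MM" ..
  define S where "S X = (\<Sum>j\<in>Nout E i \<union> {i}. X (W 0 i (Some j)))" for X :: "draw \<Rightarrow> real"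
  have Sm[measurable]: "S \<in> borel_measurable (PiM I MM)" unfolding S_def
  proof (intro borel_measurable_sum)
    fix j show "(\<lambda>X. X (W 0 i (Some j))) \<in> borel_measurable (PiM I MM)"
      using measurable_component_singleton[of "W 0 i (Some j)" I MM]
      by (simp add: I_def d0_def MM_def measurable_cong_sets[OF refl sets_dd])
  qed
  have MM0: "MM d0 = density lborel (normal_density 0 (sqrt M))" by (simp add: MM_def d0_def draw_distr_def)
  have inner: "AE X in PiM I MM. AE x in MM d0. x + S X \<noteq> 0"
  proof (rule AE_I2)
    fix X
    have "AE x in lborel. x \<noteq> - S X" by (rule AE_lborel_singleton)
    then have "AE x in density lborel (normal_density 0 (sqrt M)). x \<noteq> - S X"
      by (subst AE_density) (auto elim: eventually_mono)
    then show "AE x in MM d0. x + S X \<noteq> 0" unfolding MM0 by (rule eventually_mono) auto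
  qed
  have fm1: "fst \<in> borel_measurable (MM d0 \<Otimes>\<^sub>M PiM I MM)"
    using measurable_fst[of "MM d0" "PiM I MM"] by (simp add: MM_def measurable_cong_sets[OF refl sets_dd])
  have gm[measurable]: "(\<lambda>z. fst z + S (snd z)) \<in> borel_measurable (MM d0 \<Otimes>\<^sub>M PiM I MM)"
    by (rule borel_measurable_add[OF fm1 measurable_compose[OF measurable_snd Sm]])
  have sets1: "{z \<in> space (MM d0 \<Otimes>\<^sub>M PiM I MM). fst z + S (snd z) \<noteq> 0} \<in> sets (MM d0 \<Otimes>\<^sub>M PiM I MM)"
    by measurable
  have "AE x in MM d0. AE X in PiM I MM. x + S X \<noteq> 0"
    using P2.AE_commute[of "\<lambda>x X. x + S X \<noteq> 0"] sets1 inner by simp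
  then have ae2: "AE z in MM d0 \<Otimes>\<^sub>M PiM I MM. fst z + S (snd z) \<noteq> 0"
    by (intro P2.AE_pair_measure[OF sets1]) simp
  have fm: "(\<lambda>(x,X). X(d0:=x)) \<in> measurable (MM d0 \<Otimes>\<^sub>M PiM I MM) (PiM (insert d0 I) MM)"
    by measurable
  have cm: "(\<lambda>\<omega>. \<omega> d) \<in> borel_measurable (PiM (insert d0 I) MM)" for d
    using measurable_component_singleton[of d "insert d0 I" MM] ins
    by (simp add: MM_def measurable_cong_sets[OF refl sets_dd])
  have wnm[measurable]: "(\<lambda>\<omega>. wnorm E \<omega> 0 i) \<in> borel_measurable (PiM (insert d0 I) MM)"
    unfolding wnorm_def by (intro borel_measurable_add borel_measurable_sum cm)
  have wm: "{\<omega> \<in> space (PiM (insert d0 I) MM). wnorm E \<omega> 0 i \<noteq> 0} \<in> sets (PiM (insert d0 I) MM)"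
    by measurable
  have wS: "wnorm E (X(d0:=x)) 0 i = x + S X" for X x
    unfolding wnorm_def S_def d0_def by simp
  have "AE \<omega> in distr (MM d0 \<Otimes>\<^sub>M PiM I MM) (PiM (insert d0 I) MM) (\<lambda>(x,X). X(d0:=x)). wnorm E \<omega> 0 i \<noteq> 0"
    by (subst AE_distr_iff[OF fm wm]) (use ae2 in \<open>auto simp: wS split: prod.splits elim: eventually_mono\<close>)
  then have "AE \<omega> in PiM (insert d0 I) MM. wnorm E \<omega> 0 i \<noteq> 0" by (simp only: pair)
  then show ?thesis by (simp only: ins pp_space_def MM_def)
qed

lemma space_dd[simp]: "space (draw_distr M d) = UNIV"
  using sets_eq_imp_space_eq[OF sets_dd[of M d]] by simp

lemma half_meas:
  assumes t: "t \<ge> 1"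
  shows "emeasure (draw_distr M (W t j q)) {1/2..} = ennreal (1/2)"
proof -
  have "draw_distr M (W t j q) = uniform_measure lborel {0<..<1}" using t by (simp add: draw_distr_def)
  moreover have "{0<..<1::real} \<inter> {1/2..} = {1/2..<1}" by auto
  moreover have "emeasure lborel {1/2..<1::real} = ennreal (1/2)" by simp
  moreover have "emeasure lborel {0<..<1::real} = 1" by simp
  ultimately show ?thesis by (simp add: divide_ennreal_def)
qed

lemma blocks_AE:
  assumes M: "M > 0"
  shows "AE \<omega> in pp_space M. infinite {t. t \<ge> 2 \<and> goodb N \<omega> t L}"
proof -
  interpret DD: prob_space "draw_distr M d" for d by (rule dd_prob[OF M])
  interpret PP: product_prob_space "draw_distr M" UNIV by unfold_locales
  define Lb where "Lb = Suc L"
  define T where "T m = 2 + m * Lb" for m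
  define Q where "Q = insert None (Some ` nodes N)"
  define Dom where "Dom = {..<Lb} \<times> nodes N \<times> Q"
  define Ds where "Ds m = (\<lambda>(s,j,q). W (T m + s) j q) ` Dom" for m
  define G where "G m = {x \<in> space (pp_space M). \<forall>d\<in>Ds m. x d \<in> {1/2..}}" for m
  have finDom: "finite Dom" by (simp add: Dom_def Q_def)
  have finDs: "finite (Ds m)" for m using finDom by (simp add: Ds_def)
  have Dst: "d \<in> Ds m \<Longrightarrow> \<exists>t j q. d = W t j q \<and> t \<ge> 1" for d m
    by (auto simp: Ds_def T_def)
  have pp: "pp_space M = PiM UNIV (draw_distr M)" by (simp add: pp_space_def)
  have Gsets: "G m \<in> sets (pp_space M)" for m
    unfolding G_def pp
    by (rule sets.sets_Collect_finite_All[OF _ finDs]) (auto intro!: sets_Collect_single')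
  have probJ: "PP.prob {x \<in> space (PiM UNIV (draw_distr M)). \<forall>d\<in>J. x d \<in> {1/2..}} = (1/2) ^ card J"
    if J: "finite J" "\<And>d. d \<in> J \<Longrightarrow> \<exists>t j q. d = W t j q \<and> t \<ge> 1" for J
  proof -
    have "emeasure (PiM UNIV (draw_distr M)) {x \<in> space (PiM UNIV (draw_distr M)). \<forall>d\<in>J. x d \<in> {1/2..}}
        = (\<Prod>d\<in>J. emeasure (draw_distr M d) {1/2..})"
      by (rule PP.emeasure_PiM_Collect) (use J in auto)
    also have "\<dots> = (\<Prod>d\<in>J. ennreal (1/2))"
      by (rule prod.cong) (use J half_meas in force)+
    also have "\<dots> = ennreal ((1/2) ^ card J)" by (simp only: prod_constant) (rule ennreal_power, simp)
    finally show ?thesis by (simp add: PP.emeasure_eq_measure)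
  qed
  have probG: "PP.prob (G m) = (1/2) ^ card (Ds m)" for m
    unfolding G_def pp by (rule probJ[OF finDs Dst])
  have disj: "Ds m \<inter> Ds m' = {}" if "m \<noteq> m'" for m m'
  proof (rule ccontr)
    assume "Ds m \<inter> Ds m' \<noteq> {}"
    then obtain s j q s' j' q' where "s < Lb" "s' < Lb" "T m + s = T m' + s'"
      by (auto simp: Ds_def Dom_def)
    then have "(s + m * Lb) div Lb = (s' + m' * Lb) div Lb" by (simp add: T_def add.commute)
    moreover have "Lb \<noteq> 0" by (simp add: Lb_def)
    ultimately have "m = m'" using \<open>s < Lb\<close> \<open>s' < Lb\<close> by (simp add: div_mult_self1 div_less)
    with that show False by simp
  qed
  have indep: "PP.indep_events G UNIV"
  proof (rule PP.indep_eventsI)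
    show "\<And>i. i \<in> UNIV \<Longrightarrow> G i \<in> PP.events" using Gsets pp by simp
    fix J :: "nat set" assume J: "J \<subseteq> UNIV" "finite J" "J \<noteq> {}"
    have "(\<Inter>m\<in>J. G m) = {x \<in> space (PiM UNIV (draw_distr M)). \<forall>d\<in>(\<Union>m\<in>J. Ds m). x d \<in> {1/2..}}"
      using J(3) by (auto simp: G_def pp)
    moreover have fU: "finite (\<Union>m\<in>J. Ds m)" using J finDs by auto
    moreover have dU: "\<And>d. d \<in> (\<Union>m\<in>J. Ds m) \<Longrightarrow> \<exists>t j q. d = W t j q \<and> t \<ge> 1" using Dst by blast
    ultimately have "PP.prob (\<Inter>m\<in>J. G m) = (1/2) ^ card (\<Union>m\<in>J. Ds m)"
      using probJ[OF fU dU] by simp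
    also have "card (\<Union>m\<in>J. Ds m) = (\<Sum>m\<in>J. card (Ds m))"
      by (rule card_UN_disjoint) (use J finDs disj in auto)
    also have "(1/2::real) ^ (\<Sum>m\<in>J. card (Ds m)) = (\<Prod>m\<in>J. PP.prob (G m))"
      by (simp add: power_sum probG)
    finally show "PP.prob (\<Inter>m\<in>J. G m) = (\<Prod>m\<in>J. PP.prob (G m))" .
  qed
  define q where "q = (1/2::real) ^ card Dom"
  have q0: "q > 0" by (simp add: q_def)
  have Gq: "PP.prob (G m) \<ge> q" for m
  proof -
    have "card (Ds m) \<le> card Dom" unfolding Ds_def by (rule card_image_le[OF finDom])
    then have "(1/2::real) ^ card Dom \<le> (1/2) ^ card (Ds m)" by (rule power_decreasing) auto
    then show ?thesis by (simp add: probG q_def)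
  qed
  define U where "U n = (\<Union>m\<in>{n..}. G m)" for n
  have Usets: "range U \<subseteq> PP.events"
    using Gsets pp by (auto simp: U_def intro!: sets.countable_UN')
  have Udec: "decseq U" unfolding decseq_def U_def by (auto intro: order_trans)
  have Uq: "PP.prob (U n) \<ge> q" for n
  proof -
    have "PP.prob (G n) \<le> PP.prob (U n)"
      by (rule PP.finite_measure_mono) (use Usets in \<open>auto simp: U_def\<close>)
    then show ?thesis using Gq[of n] by simp
  qed
  have lim: "(\<lambda>n. PP.prob (U n)) \<longlonglongrightarrow> PP.prob (\<Inter>n. U n)"
    by (rule PP.finite_Lim_measure_decseq[OF Usets Udec])
  have "q \<le> PP.prob (\<Inter>n. U n)"
    by (rule LIMSEQ_le_const[OF lim]) (use Uq in auto)
  moreover have "PP.prob (\<Inter>n. \<Union>m\<in>{n..}. G m) = 0 \<or> PP.prob (\<Inter>n. \<Union>m\<in>{n..}. G m) = 1"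
    by (rule PP.borel_0_1_law[OF indep])
  ultimately have p1: "PP.prob (\<Inter>n. U n) = 1" using q0 by (auto simp: U_def)
  have Ueq: "(\<Inter>n. U n) \<in> PP.events" using Usets by auto
  have ae: "AE x in PiM UNIV (draw_distr M). x \<in> (\<Inter>n. U n)"
    using PP.prob_eq_1[OF Ueq] p1 by simp
  show ?thesis unfolding pp
  proof (rule eventually_mono[OF ae])
    fix \<omega> assume w: "\<omega> \<in> (\<Inter>n. U n)"
    show "infinite {t. t \<ge> 2 \<and> goodb N \<omega> t L}"
      unfolding infinite_nat_iff_unbounded_le
    proof
      fix n
      obtain m where m: "m \<ge> n" "\<omega> \<in> G m" using w by (auto simp: U_def)
      have "goodb N \<omega> (T m) L"
        unfolding goodb_def
      proof (intro allI impI ballI)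
        fix s j q' assume s: "s < L" and j: "j \<in> nodes N" and q': "q' \<in> insert None (Some ` nodes N)"
        have "(s,j,q') \<in> Dom" using s j q' by (simp add: Dom_def Q_def Lb_def)
        then have "W (T m + s) j q' \<in> Ds m" unfolding Ds_def by (rule rev_image_eqI) simp
        then show "1/2 \<le> \<omega> (W (T m + s) j q')" using m(2) by (auto simp: G_def)
      qed
      moreover have "T m \<ge> n" "T m \<ge> 2" using m(1) by (auto simp: T_def Lb_def)
      ultimately show "\<exists>t\<ge>n. t \<in> {t. t \<ge> 2 \<and> goodb N \<omega> t L}" by auto
    qed
  qed
qed

theorem theorem3:
  fixes N :: nat and E :: "(nat \<times> nat) set" and M :: real and A :: "nat set" and i :: nat
  assumes "N > 2"
    and "digraph_on N E"
    and "strongly_connected N E"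
    and "M > 0"
    and "A \<subseteq> nodes N"
    and "i \<in> nodes N" and "i \<notin> A"
    and "Nout E i \<union> Nin E i \<subseteq> A"
  shows "\<exists>F :: nat \<Rightarrow> (obs \<Rightarrow> real option) \<Rightarrow> real.
           \<forall>x0 :: nat \<Rightarrow> real.
             AE \<omega> in pp_space M. (\<lambda>k. F k (info N E A x0 \<omega> k)) \<longlonglongrightarrow> x0 i"
proof -
  note N2 = assms(1) and g = assms(2) and sc = assms(3) and M = assms(4)
    and i = assms(6) and Asub = assms(8)
  define v where "v = (if i = 1 then 2 else (1::nat))"
  have v: "v \<in> nodes N" "v \<noteq> i" using N2 i by (auto simp: v_def nodes_def)
  have "(v, i) \<in> E\<^sup>*" using sc v i by (auto simp: strongly_connected_def)
  then obtain a0 where a0: "a0 \<in> Nout E i"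
  proof (cases rule: rtranclE)
    case base then show ?thesis using v by simp
  next
    case (step y) then show ?thesis using that by (auto simp: Nout_def)
  qed
  obtain L where L: "\<forall>u\<in>VV N. \<forall>v\<in>VV N. (u,v) \<in> (Rel N E) ^^ L"
    using R_paths[OF g sc] by blast
  show ?thesis
  proof (intro exI allI)
    fix x0 :: "nat \<Rightarrow> real"
    show "AE \<omega> in pp_space M. (\<lambda>k. Fest E i a0 k (info N E A x0 \<omega> k)) \<longlonglongrightarrow> x0 i"
      using P1_AE[OF M] w0_AE[OF M, of E i] blocks_AE[OF M, of N L]
    proof eventually_elim
      case (elim \<omega>)
      show ?case by (rule det_main[OF g elim(1) i Asub a0 elim(2) L elim(3)])
    qed
  qed
qed

end
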